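(* Let $G$ be a connected graph, $v_{\mathsf{init}}\in V(G)$, and $\mathsf{VC}$ a vertex cover of $G$ with $v_{\mathsf{init}}\in\mathsf{VC}$. Let $\widehat{E}$ be a multiset with elements from $E(G)$ such that $\mathsf{Graph}(\widehat{E})$ is connected, $v_{\mathsf{init}}\in V(\mathsf{Graph}(\widehat{E}))$, every vertex of $\mathsf{Graph}(\widehat{E})$ has even degree, and every edge appears at most twice in $\widehat{E}$. Then there exist a sub-multiset $\mathsf{CC}\subseteq\widehat{E}$ and a multiset $\mathcal{C}$ of cycles in $\mathsf{Graph}(\widehat{E})$ such that: (1) $\mathsf{Graph}(\mathsf{CC})$ is a $\overline{G}$-submultigraph, i.e., for every equivalence class $u^*\in\mathsf{EQ}$, $|V(\mathsf{Graph}(\mathsf{CC}))\cap u^*|\le\mathsf{NumVer}(u^* )$; (2) $\mathsf{Graph}(\mathsf{CC})$ is connected, $v_{\mathsf{init}}\in V(\mathsf{Graph}(\mathsf{CC}))$, and every vertex of $\mathsf{Graph}(\mathsf{CC})$ has even degree in it; (3) $V(\mathsf{Graph}(\mathsf{CC}))\cap\mathsf{VC}=V(\mathsf{Graph}(\widehat{E}))\cap\mathsf{VC}$; (4) at most $2|\mathsf{VC}|^2$ cycles in $\mathcal{C}$ have length other than $4$; (5) the cycles in $\mathcal{C}$ of length other than $4$ are simple; (6) the multiset sum $\mathsf{CC}\uplus\biguplus_{C\in\mathcal{C}}E(C)$ equals $\widehat{E}$.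
   Context: For a multiset $\widehat{E}$ of edges, $\mathsf{Graph}(\widehat{E})$ is the multigraph whose vertices are the endpoints of edges of $\widehat{E}$ and whose edge multiset is $\widehat{E}$; degrees count multiplicity. Paths/cycles: a path is a sequence $(v_0,\dots,v_\ell)$ with consecutive vertices adjacent (repetitions allowed), length $\ell$; a cycle has $v_0=v_\ell$; it is simple if $v_0,\dots,v_{\ell-1}$ are distinct; $E(C)$ is the multiset of traversed edges. Let $\mathsf{IND}=V(G)\setminus\mathsf{VC}$. Two vertices $u,v\in\mathsf{IND}$ are equivalent if $N_G(u)=N_G(v)$; $\mathsf{EQ}$ is the set of equivalence classes. The equivalence graph $G^*$ has vertex set $\mathsf{VC}\cup\mathsf{EQ}$ (classes as single vertices), with edges $\{u,v\}\in E(G)$ for $u,v\in\mathsf{VC}$, and edges $\{u^*,v\}$ for $u^*\in\mathsf{EQ}$, $v\in\mathsf{VC}$ whenever some $u\in u^*$ has $\{u,v\}\in E(G)$. For $u^*\in\mathsf{EQ}$, $\mathsf{NumVer}(u^* )=\min\{|u^*|,\,2^{|N_{G^*}(u^* )|}+|\mathsf{VC}|^2\}$. *)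

theory Defs
  imports Main "HOL-Library.Multiset"
begin

definition simple_graph :: "'a set \<Rightarrow> 'a set set \<Rightarrow> bool" where
  "simple_graph V E \<longleftrightarrow> finite V \<and> (\<forall>e\<in>E. e \<subseteq> V \<and> card e = 2)"

definition graph_connected :: "'a set \<Rightarrow> 'a set set \<Rightarrow> bool" where
  "graph_connected V E \<longleftrightarrow>
     (\<forall>u\<in>V. \<forall>v\<in>V. (\<lambda>x y. {x, y} \<in> E)\<^sup>*\<^sup>* u v)"

definition vertex_cover :: "'a set \<Rightarrow> 'a set set \<Rightarrow> 'a set \<Rightarrow> bool" where
  "vertex_cover V E VC \<longleftrightarrow> VC \<subseteq> V \<and> (\<forall>e\<in>E. e \<inter> VC \<noteq> {})"

definition nbhd :: "'a set set \<Rightarrow> 'a \<Rightarrow> 'a set" where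
  "nbhd E u = {w. {u, w} \<in> E}"

definition IND :: "'a set \<Rightarrow> 'a set \<Rightarrow> 'a set" where
  "IND V VC = V - VC"

definition EQ :: "'a set \<Rightarrow> 'a set set \<Rightarrow> 'a set \<Rightarrow> 'a set set" where
  "EQ V E VC = (\<lambda>u. {w \<in> IND V VC. nbhd E w = nbhd E u}) ` IND V VC"

definition nbhd_star :: "'a set set \<Rightarrow> 'a set \<Rightarrow> 'a set \<Rightarrow> 'a set" where
  "nbhd_star E VC U = {v \<in> VC. \<exists>u\<in>U. {u, v} \<in> E}"

definition NumVer :: "'a set set \<Rightarrow> 'a set \<Rightarrow> 'a set \<Rightarrow> nat" where
  "NumVer E VC U = min (card U) (2 ^ card (nbhd_star E VC U) + card VC ^ 2)"

definition mverts :: "'a set multiset \<Rightarrow> 'a set" where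
  "mverts M = \<Union> (set_mset M)"

definition mdeg :: "'a set multiset \<Rightarrow> 'a \<Rightarrow> nat" where
  "mdeg M v = size (filter_mset (\<lambda>e. v \<in> e) M)"

definition mconnected :: "'a set multiset \<Rightarrow> bool" where
  "mconnected M \<longleftrightarrow> graph_connected (mverts M) (set_mset M)"

definition all_even_deg :: "'a set multiset \<Rightarrow> bool" where
  "all_even_deg M \<longleftrightarrow> (\<forall>v\<in>mverts M. even (mdeg M v))"

text \<open>A cycle is a vertex sequence [v0,...,vl] with v0 = vl, consecutive vertices adjacent.
  Its length is l; its edge multiset E(C) is the multiset of traversed edges.\<close>
definition cyc_len :: "'a list \<Rightarrow> nat" where
  "cyc_len xs = length xs - 1"

definition cyc_edges :: "'a list \<Rightarrow> 'a set multiset" where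
  "cyc_edges xs = mset (map (\<lambda>(a, b). {a, b}) (zip xs (tl xs)))"

definition is_cycle_in :: "'a set multiset \<Rightarrow> 'a list \<Rightarrow> bool" where
  "is_cycle_in M xs \<longleftrightarrow> xs \<noteq> [] \<and> hd xs = last xs \<and>
     (\<forall>i < length xs - 1. {xs ! i, xs ! Suc i} \<in># M)"

definition simple_cycle :: "'a list \<Rightarrow> bool" where
  "simple_cycle xs \<longleftrightarrow> distinct (butlast xs)"

end

theory Submission
  imports Defs
begin


lemma mdeg_zero: "v \<notin> mverts M \<Longrightarrow> mdeg M v = 0"
  unfolding mdeg_def mverts_def by (auto simp: filter_mset_eq_conv)

lemma mdeg_diff: "X \<subseteq># M \<Longrightarrow> mdeg (M - X) v = mdeg M v - mdeg X v"
  unfolding mdeg_def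
  by (metis multiset_filter_mono size_Diff_submset filter_diff_mset)

lemma walk_edges: "cyc_edges [a,u,b,w,a] = {#{a,u},{u,b},{b,w},{w,a}#}"
  unfolding cyc_edges_def by simp

lemma walk_deg:
  assumes "a \<noteq> u" "a \<noteq> w" "b \<noteq> u" "b \<noteq> w" "u \<noteq> w"
  shows "even (mdeg {#{a,u},{u,b},{b,w},{w,a}#} v)"
  using assms unfolding mdeg_def by auto

lemma walk_cycle:
  assumes "{#{a,u},{u,b},{b,w},{w,a}#} \<subseteq># M"
  shows "is_cycle_in M [a,u,b,w,a]"
proof -
  have h: "{a,u} \<in># M" "{u,b} \<in># M" "{b,w} \<in># M" "{w,a} \<in># M"
    using mset_subset_eqD[OF assms] by auto
  show ?thesis unfolding is_cycle_in_def
  proof (intro conjI allI impI)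
    fix i assume "i < length [a,u,b,w,a] - 1"
    then have "i < 4" by simp
    then have "i = 0 \<or> i = 1 \<or> i = 2 \<or> i = 3" by auto
    then show "{[a,u,b,w,a] ! i, [a,u,b,w,a] ! Suc i} \<in># M" using h by auto
  qed simp_all
qed



lemma size_ge2: "size (M::'b multiset) \<ge> 2 \<Longrightarrow> \<exists>x y. {#x,y#} \<subseteq># M"
proof -
  assume "size M \<ge> 2"
  then obtain x where x: "x \<in># M" by (metis multiset_nonemptyE size_empty nat.distinct(1) le_zero_eq numeral_2_eq_2)
  then have "size (M - {#x#}) \<ge> 1" using \<open>size M \<ge> 2\<close> by (simp add: size_Diff_singleton)
  then obtain y where y: "y \<in># M - {#x#}" by (metis One_nat_def multiset_nonemptyE not_one_le_zero size_empty)
  have "{#x,y#} \<subseteq># M" using x y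
    by (metis add_mset_add_single insert_DiffM mset_subset_eq_mono_add_right_cancel single_subset_iff)
  then show ?thesis by blast
qed
lemma disj_add_sub: "A \<subseteq># C \<Longrightarrow> B \<subseteq># C \<Longrightarrow> set_mset A \<inter> set_mset B = {} \<Longrightarrow> A + B \<subseteq># C"
  unfolding subseteq_mset_def
  by (metis add.commute add.right_neutral count_union disjoint_iff not_in_iff)
lemma disj_sub_diff: "A \<subseteq># C \<Longrightarrow> B \<subseteq># C \<Longrightarrow> set_mset A \<inter> set_mset B = {} \<Longrightarrow> A \<subseteq># C - B"
  using disj_add_sub by (metis subset_mset.le_diff_conv2)

locale ctx =
  fixes V :: "'a set" and E :: "'a set set" and VC :: "'a set" and v_init :: 'a
    and Ehat :: "'a set multiset"
  assumes sg: "simple_graph V E"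
    and vc: "vertex_cover V E VC" and vi: "v_init \<in> VC"
    and sub: "set_mset Ehat \<subseteq> E"
    and con: "mconnected Ehat" and vim: "v_init \<in> mverts Ehat" and ev: "all_even_deg Ehat"
begin

definition supp :: "'a \<Rightarrow> 'a set" where "supp y = {a. {a,y} \<in># Ehat}"
definition repS :: "'a set \<Rightarrow> 'a" where
  "repS S = (SOME r. r \<in> mverts Ehat \<and> r \<notin> VC \<and> supp r = S)"
definition rep :: "'a \<Rightarrow> 'a" where "rep y = repS (supp y)"
definition Reps where "Reps = rep ` (mverts Ehat - VC)"
definition NR where "NR = (mverts Ehat - VC) - Reps"
definition Skel where "Skel = filter_mset (\<lambda>e. e \<inter> NR = {}) Ehat"

lemma rep_props: assumes "y \<in> mverts Ehat" "y \<notin> VC"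
  shows "rep y \<in> mverts Ehat" "rep y \<notin> VC" "supp (rep y) = supp y"
proof -
  have "\<exists>r. r \<in> mverts Ehat \<and> r \<notin> VC \<and> supp r = supp y" using assms by blast
  from someI_ex[OF this] show "rep y \<in> mverts Ehat" "rep y \<notin> VC" "supp (rep y) = supp y"
    unfolding rep_def repS_def by auto
qed

lemma rep_rep: assumes "r \<in> Reps" shows "rep r = r"
proof -
  obtain y where y: "y \<in> mverts Ehat" "y \<notin> VC" "r = rep y" using assms unfolding Reps_def by auto
  show ?thesis using rep_props[OF y(1,2)] y(3) unfolding rep_def by simp
qed

lemma edge_E: "e \<in># Ehat \<Longrightarrow> e \<in> E" using sub by auto

lemma edge_form: assumes "e \<in> E" "x \<in> e"
  shows "\<exists>z. z \<noteq> x \<and> e = {x,z} \<and> (x \<in> VC \<or> z \<in> VC)"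
proof -
  have "card e = 2" "e \<inter> VC \<noteq> {}" using assms sg vc unfolding simple_graph_def vertex_cover_def by auto
  then obtain p q where pq: "p \<noteq> q" "e = {p,q}" by (meson card_2_iff)
  then show ?thesis using assms(2) \<open>e \<inter> VC \<noteq> {}\<close> by auto
qed

lemma ind_edge: assumes "e \<in> E" "x \<in> e" "x \<notin> VC"
  shows "\<exists>a. a \<in> VC \<and> a \<noteq> x \<and> e = {x,a}"
  using edge_form[OF assms(1,2)] assms(3) by auto

lemma skel_VC: "{y,z} \<in># Ehat \<Longrightarrow> y \<in> VC \<Longrightarrow> z \<in> VC \<Longrightarrow> {y,z} \<in># Skel"
  unfolding Skel_def NR_def by auto

lemma skel_rep: assumes "{y,z} \<in># Ehat" "y \<in> VC" "z \<notin> VC"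
  shows "{y, rep z} \<in># Skel"
proof -
  have zm: "z \<in> mverts Ehat" using assms(1) unfolding mverts_def by auto
  have "y \<in> supp z" using assms(1) unfolding supp_def by auto
  then have "{y, rep z} \<in># Ehat" using rep_props(3)[OF zm assms(3)] unfolding supp_def by auto
  moreover have "rep z \<in> Reps" using zm assms(3) unfolding Reps_def by auto
  ultimately show ?thesis using assms(2) unfolding Skel_def NR_def by auto
qed

lemma vc_in_skel: assumes "a \<in> mverts Ehat" "a \<in> VC" shows "a \<in> mverts Skel"
proof -
  obtain e where e: "e \<in># Ehat" "a \<in> e" using assms(1) unfolding mverts_def by auto
  obtain z where z: "z \<noteq> a" "e = {a,z}" using edge_form[OF edge_E[OF e(1)] e(2)] by auto
  show ?thesis
  proof (cases "z \<in> VC")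
    case True
    have "{a,z} \<in># Skel" using skel_VC[of a z] e z assms True by simp
    then show ?thesis unfolding mverts_def by blast
  next
    case False
    have "{a,rep z} \<in># Skel" using skel_rep[of a z] e z assms False by simp
    then show ?thesis unfolding mverts_def by blast
  qed
qed

abbreviation R :: "'a set multiset \<Rightarrow> 'a \<Rightarrow> 'a \<Rightarrow> bool" where "R M \<equiv> (\<lambda>x y. {x,y} \<in> set_mset M)"

lemma conn_skel:
  assumes "(R Ehat)\<^sup>*\<^sup>* v_init x"
  shows "(x \<in> VC \<longrightarrow> (R Skel)\<^sup>*\<^sup>* v_init x) \<and> (x \<notin> VC \<longrightarrow> x \<in> mverts Ehat \<longrightarrow> (R Skel)\<^sup>*\<^sup>* v_init (rep x))"
  using assms
proof (induction rule: rtranclp_induct)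
  case base then show ?case using vi by simp
next
  case (step y z)
  have e: "{y,z} \<in># Ehat" using step(2) by simp
  have ym: "y \<in> mverts Ehat" and zm: "z \<in> mverts Ehat" using e unfolding mverts_def by auto
  show ?case
  proof (cases "y \<in> VC")
    case yv: True
    have py: "(R Skel)\<^sup>*\<^sup>* v_init y" using step(3) yv by simp
    show ?thesis
    proof (cases "z \<in> VC")
      case True
      have "R Skel y z" using skel_VC[OF e yv True] by simp
      then have "(R Skel)\<^sup>*\<^sup>* v_init z" by (rule rtranclp.rtrancl_into_rtrancl[OF py])
      then show ?thesis using True by (intro conjI impI) blast+
    next
      case False
      have "R Skel y (rep z)" using skel_rep[OF e yv False] by simp
      then have "(R Skel)\<^sup>*\<^sup>* v_init (rep z)" by (rule rtranclp.rtrancl_into_rtrancl[OF py])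
      then show ?thesis using False by (intro conjI impI) blast+
    qed
  next
    case yn: False
    have "{y,z} \<inter> VC \<noteq> {}" using edge_E[OF e] vc unfolding vertex_cover_def by blast
    then have zv: "z \<in> VC" using yn by blast
    have py: "(R Skel)\<^sup>*\<^sup>* v_init (rep y)" using step(3) yn ym by simp
    have "{z,y} \<in># Ehat" using e by (simp add: insert_commute)
    from skel_rep[OF this zv yn] have "R Skel (rep y) z" by (simp add: insert_commute)
    then have "(R Skel)\<^sup>*\<^sup>* v_init z" by (rule rtranclp.rtrancl_into_rtrancl[OF py])
    then show ?thesis using zv by (intro conjI impI) blast+
  qed
qed

lemma vc_conn: "a \<in> mverts Ehat \<Longrightarrow> a \<in> VC \<Longrightarrow> (R Skel)\<^sup>*\<^sup>* v_init a"
  using conn_skel con vim unfolding mconnected_def graph_connected_def by blast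

definition Inv where
  "Inv CC Cs \<longleftrightarrow> Skel \<subseteq># CC \<and> CC + sum_mset (image_mset cyc_edges Cs) = Ehat \<and>
     (\<forall>C\<in>#Cs. is_cycle_in Ehat C \<and> cyc_len C = 4) \<and> (\<forall>v. even (mdeg CC v))"

lemma Inv_init: "Inv Ehat {#}"
  unfolding Inv_def
proof (intro conjI allI)
  show "Skel \<subseteq># Ehat" unfolding Skel_def by simp
  fix v show "even (mdeg Ehat v)"
    using ev mdeg_zero[of v Ehat] unfolding all_even_deg_def by (cases "v \<in> mverts Ehat") auto
qed simp_all

lemma Inv_sub: "Inv CC Cs \<Longrightarrow> CC \<subseteq># Ehat"
  unfolding Inv_def by (metis mset_subset_eq_add_left)

lemma Inv_step:
  assumes I: "Inv CC Cs" and u: "u \<in> NR" and w: "w \<in> NR" and uw: "u \<noteq> w"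
    and a: "a \<in> VC" and b: "b \<in> VC"
    and su: "{#{a,u},{u,b}#} \<subseteq># CC" and sw: "{#{a,w},{w,b}#} \<subseteq># CC"
  shows "Inv (CC - {#{a,u},{u,b},{b,w},{w,a}#}) (add_mset [a,u,b,w,a] Cs)"
proof -
  let ?X = "{#{a,u},{u,b},{b,w},{w,a}#}"
  have uv: "u \<notin> VC" and wv: "w \<notin> VC" using u w unfolding NR_def by auto
  have sw': "{#{b,w},{w,a}#} \<subseteq># CC" using sw by (simp add: insert_commute add_mset_commute)
  have disj: "set_mset {#{a,u},{u,b}#} \<inter> set_mset {#{b,w},{w,a}#} = {}"
    using uw uv wv a b by (auto simp: doubleton_eq_iff)
  have eqX: "{#{a,u},{u,b}#} + {#{b,w},{w,a}#} = ?X" by simp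
  have X: "?X \<subseteq># CC" using disj_add_sub[OF su sw' disj] unfolding eqX .
  have XS: "set_mset Skel \<inter> set_mset ?X = {}" using u w unfolding Skel_def by auto
  have s1: "Skel \<subseteq># CC - ?X" using disj_sub_diff[OF _ X XS] I unfolding Inv_def by blast
  have s2: "(CC - ?X) + sum_mset (image_mset cyc_edges (add_mset [a,u,b,w,a] Cs)) = Ehat"
  proof -
    have "sum_mset (image_mset cyc_edges (add_mset [a,u,b,w,a] Cs)) = ?X + sum_mset (image_mset cyc_edges Cs)"
      by (simp add: walk_edges)
    then have "(CC - ?X) + sum_mset (image_mset cyc_edges (add_mset [a,u,b,w,a] Cs)) = (CC - ?X + ?X) + sum_mset (image_mset cyc_edges Cs)"
      by (simp add: add.assoc)
    also have "CC - ?X + ?X = CC" using X by (rule subset_mset.diff_add)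
    finally show ?thesis using I unfolding Inv_def by simp
  qed
  have XE: "?X \<subseteq># Ehat" using X Inv_sub[OF I] by (meson subset_mset.order_trans)
  have s3: "\<forall>C\<in>#add_mset [a,u,b,w,a] Cs. is_cycle_in Ehat C \<and> cyc_len C = 4"
    using I walk_cycle[OF XE] unfolding Inv_def cyc_len_def by auto
  have s4: "even (mdeg (CC - ?X) v)" for v
  proof -
    have "even (mdeg ?X v)" by (rule walk_deg) (use uv wv a b uw in auto)
    moreover have "even (mdeg CC v)" using I unfolding Inv_def by auto
    moreover have "mdeg ?X v \<le> mdeg CC v" unfolding mdeg_def
      by (rule size_mset_mono[OF multiset_filter_mono[OF X]])
    ultimately show ?thesis using mdeg_diff[OF X, of v] by auto
  qed
  show ?thesis unfolding Inv_def using s1 s2 s3 s4 by blast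
qed

end

context ctx begin

lemma X_sub:
  assumes u: "u \<notin> VC" and w: "w \<notin> VC" and uw: "u \<noteq> w"
    and a: "a \<in> VC" and b: "b \<in> VC"
    and su: "{#{a,u},{u,b}#} \<subseteq># CC" and sw: "{#{a,w},{w,b}#} \<subseteq># CC"
  shows "{#{a,u},{u,b},{b,w},{w,a}#} \<subseteq># CC"
proof -
  let ?X = "{#{a,u},{u,b},{b,w},{w,a}#}"
  have sw': "{#{b,w},{w,a}#} \<subseteq># CC" using sw by (simp add: insert_commute add_mset_commute)
  have disj: "set_mset {#{a,u},{u,b}#} \<inter> set_mset {#{b,w},{w,a}#} = {}"
    using uw u w a b by (auto simp: doubleton_eq_iff)
  have eqX: "{#{a,u},{u,b}#} + {#{b,w},{w,a}#} = ?X" by simp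
  show ?thesis using disj_add_sub[OF su sw' disj] unfolding eqX .
qed

lemma mverts_mono: "A \<subseteq># B \<Longrightarrow> mverts A \<subseteq> mverts B"
  unfolding mverts_def by (auto dest: mset_subset_eqD)

lemma witness:
  assumes I: "Inv CC Cs" and wv: "w \<notin> VC" and wm: "w \<in> mverts CC"
  shows "\<exists>a b. a \<in> VC \<and> b \<in> VC \<and> {#{a,w},{w,b}#} \<subseteq># CC"
proof -
  let ?F = "filter_mset (\<lambda>e. w \<in> e) CC"
  obtain e where e: "e \<in># CC" "w \<in> e" using wm unfolding mverts_def by auto
  have "e \<in># ?F" using e by simp
  then have "size ?F \<noteq> 0" by (metis empty_iff set_mset_empty size_eq_0_iff_empty)
  moreover have "even (size ?F)" using I unfolding Inv_def mdeg_def by blast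
  ultimately have "size ?F \<ge> 2" by (elim evenE) simp
  then obtain x y where xy: "{#x,y#} \<subseteq># ?F" using size_ge2 by blast
  have sub: "CC \<subseteq># Ehat" by (rule Inv_sub[OF I])
  have xF: "x \<in># ?F" and yF: "y \<in># ?F" using xy by (auto dest: mset_subset_eqD)
  have xE: "x \<in> E" "w \<in> x" using xF sub edge_E by (auto dest: mset_subset_eqD)
  have yE: "y \<in> E" "w \<in> y" using yF sub edge_E by (auto dest: mset_subset_eqD)
  obtain a where a: "a \<in> VC" "x = {w,a}" using ind_edge[OF xE wv] by blast
  obtain b where b: "b \<in> VC" "y = {w,b}" using ind_edge[OF yE wv] by blast
  have "{#x,y#} \<subseteq># CC" using xy multiset_filter_subset subset_mset.order_trans by blast
  then have "{#{a,w},{w,b}#} \<subseteq># CC" using a b by (simp add: insert_commute)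
  then show ?thesis using a b by blast
qed

lemma main_thm:
  shows "\<exists>CC Cs. CC \<subseteq># Ehat \<and> (\<forall>C\<in>#Cs. is_cycle_in Ehat C) \<and>
     (\<forall>U\<in>EQ V E VC. card (mverts CC \<inter> U) \<le> NumVer E VC U) \<and>
     mconnected CC \<and> v_init \<in> mverts CC \<and> all_even_deg CC \<and>
     mverts CC \<inter> VC = mverts Ehat \<inter> VC \<and>
     size (filter_mset (\<lambda>C. cyc_len C \<noteq> 4) Cs) \<le> 2 * card VC ^ 2 \<and>
     (\<forall>C\<in>#Cs. cyc_len C \<noteq> 4 \<longrightarrow> simple_cycle C) \<and>
     CC + sum_mset (image_mset cyc_edges Cs) = Ehat"
proof -
  have "\<exists>p. Inv (fst p) (snd p) \<and> (\<forall>q. Inv (fst q) (snd q) \<longrightarrow> size (fst p) \<le> size (fst q))"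
    by (rule ex_has_least_nat[of "\<lambda>p. Inv (fst p) (snd p)" "(Ehat, {#})" "\<lambda>p. size (fst p)"]) (simp add: Inv_init)
  then obtain p where p: "Inv (fst p) (snd p)" and pmin: "\<And>q. Inv (fst q) (snd q) \<Longrightarrow> size (fst p) \<le> size (fst q)"
    by blast
  define CC where "CC = fst p"
  define Cs where "Cs = snd p"
  have I: "Inv CC Cs" using p unfolding CC_def Cs_def .
  have min: "size CC \<le> size CC'" if "Inv CC' Cs'" for CC' Cs'
    using pmin[of "(CC', Cs')"] that unfolding CC_def by simp
  have sub: "CC \<subseteq># Ehat" by (rule Inv_sub[OF I])
  have skel: "Skel \<subseteq># CC" using I unfolding Inv_def by blast
  have nored: False if "u \<in> NR" "w \<in> NR" "u \<noteq> w" "a \<in> VC" "b \<in> VC"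
      "{#{a,u},{u,b}#} \<subseteq># CC" "{#{a,w},{w,b}#} \<subseteq># CC" for u w a b
  proof -
    let ?X = "{#{a,u},{u,b},{b,w},{w,a}#}"
    have I2: "Inv (CC - ?X) (add_mset [a,u,b,w,a] Cs)" using Inv_step[OF I that] .
    have "u \<notin> VC" "w \<notin> VC" using that unfolding NR_def by auto
    then have X: "?X \<subseteq># CC" using X_sub that by blast
    have "size (CC - ?X) = size CC - 4" using size_Diff_submset[OF X] by simp
    moreover have "size ?X \<le> size CC" using size_mset_mono[OF X] .
    ultimately have "size (CC - ?X) < size CC" by simp
    with min[OF I2] show False by simp
  qed
  have Rmono: "(R Skel)\<^sup>*\<^sup>* x y \<Longrightarrow> (R CC)\<^sup>*\<^sup>* x y" for x y
  proof -
    have "set_mset Skel \<subseteq> set_mset CC" using skel by (rule set_mset_mono)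
    then have "R Skel \<le> R CC" by auto
    then show "(R Skel)\<^sup>*\<^sup>* x y \<Longrightarrow> (R CC)\<^sup>*\<^sup>* x y" using rtranclp_mono by blast
  qed
  have cvc: "(R CC)\<^sup>*\<^sup>* v_init a" if "a \<in> mverts Ehat" "a \<in> VC" for a
    using vc_conn[OF that] Rmono by blast
  have reach: "(R CC)\<^sup>*\<^sup>* v_init x" if xm: "x \<in> mverts CC" for x
  proof (cases "x \<in> VC")
    case True
    then show ?thesis using cvc xm mverts_mono[OF sub] by blast
  next
    case False
    obtain e where e: "e \<in># CC" "x \<in> e" using xm unfolding mverts_def by auto
    have eE: "e \<in> E" using e(1) sub edge_E by (auto dest: mset_subset_eqD)
    obtain a where a: "a \<in> VC" "e = {x,a}" using ind_edge[OF eE e(2) False] by blast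
    have am: "a \<in> mverts Ehat" using e a sub unfolding mverts_def by (auto dest: mset_subset_eqD)
    have "R CC a x" using e a by (simp add: insert_commute)
    then show ?thesis using rtranclp.rtrancl_into_rtrancl[OF cvc[OF am a(1)]] by blast
  qed
  have symR: "(R CC)\<^sup>*\<^sup>* y x" if "(R CC)\<^sup>*\<^sup>* x y" for x y
  proof -
    have "(R CC)\<inverse>\<inverse> = R CC" by (auto simp: fun_eq_iff insert_commute)
    then show ?thesis using rtranclp_converseI[OF that] by simp
  qed
  have mcon: "mconnected CC"
    unfolding mconnected_def graph_connected_def
  proof (intro ballI)
    fix x y assume "x \<in> mverts CC" "y \<in> mverts CC"
    then show "(R CC)\<^sup>*\<^sup>* x y" using reach symR by (meson rtranclp_trans)
  qed
  have vcs: "mverts CC \<inter> VC = mverts Ehat \<inter> VC"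
  proof
    show "mverts CC \<inter> VC \<subseteq> mverts Ehat \<inter> VC" using mverts_mono[OF sub] by blast
    show "mverts Ehat \<inter> VC \<subseteq> mverts CC \<inter> VC" using vc_in_skel mverts_mono[OF skel] by blast
  qed
  have vin: "v_init \<in> mverts CC" using vcs vim vi by blast
  have evn: "all_even_deg CC" using I unfolding Inv_def all_even_deg_def by blast
  have cyc4: "\<forall>C\<in>#Cs. is_cycle_in Ehat C \<and> cyc_len C = 4" using I unfolding Inv_def by blast
  have f0: "filter_mset (\<lambda>C. cyc_len C \<noteq> 4) Cs = {#}" using cyc4 by (auto simp: filter_mset_eq_conv)
  have f0': "size (filter_mset (\<lambda>C. cyc_len C \<noteq> 4) Cs) \<le> 2 * card VC ^ 2" unfolding f0 by simp
  have sumeq: "CC + sum_mset (image_mset cyc_edges Cs) = Ehat" using I unfolding Inv_def by blast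
  have finV: "finite V" using sg unfolding simple_graph_def by blast
  have VCV: "VC \<subseteq> V" using vc unfolding vertex_cover_def by blast
  have finVC: "finite VC" using finite_subset[OF VCV finV] .
  have bound: "card (mverts CC \<inter> U) \<le> NumVer E VC U" if U: "U \<in> EQ V E VC" for U
  proof -
    have UV: "U \<subseteq> V - VC" using U unfolding EQ_def IND_def by auto
    have finU: "finite U" using finite_subset[OF _ finV] UV by blast
    define Nst where "Nst = nbhd_star E VC U"
    have finN: "finite Nst" unfolding Nst_def nbhd_star_def using finVC by simp
    define A where "A = Reps \<inter> U"
    define B where "B = NR \<inter> mverts CC \<inter> U"
    have AB: "mverts CC \<inter> U \<subseteq> A \<union> B"
    proof
      fix x assume x: "x \<in> mverts CC \<inter> U"
      then have "x \<in> mverts Ehat" "x \<notin> VC" using mverts_mono[OF sub] UV by auto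
      then show "x \<in> A \<union> B" using x unfolding A_def B_def NR_def by auto
    qed
    have finAB: "finite (A \<union> B)" using finU unfolding A_def B_def by auto
    have cA: "card A \<le> 2 ^ card Nst"
    proof -
      have inj: "inj_on supp A"
      proof (rule inj_onI)
        fix x y assume "x \<in> A" "y \<in> A" "supp x = supp y"
        then have xR: "x \<in> Reps" and yR: "y \<in> Reps" and sxy: "supp x = supp y" unfolding A_def by blast+
        have rx: "rep x = x" by (rule rep_rep[OF xR])
        have ry: "rep y = y" by (rule rep_rep[OF yR])
        have rxy: "rep x = rep y" by (simp only: rep_def sxy)
        from rxy show "x = y" unfolding rx ry .
      qed
      have img: "supp ` A \<subseteq> Pow Nst"
      proof
        fix S assume "S \<in> supp ` A"
        then obtain r where r: "r \<in> A" "S = supp r" by blast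
        have rU: "r \<in> U" "r \<notin> VC" using r UV unfolding A_def by auto
        show "S \<in> Pow Nst"
        proof (rule PowI, rule subsetI)
          fix a assume "a \<in> S"
          then have ea: "{a,r} \<in># Ehat" using r unfolding supp_def by simp
          then have eE: "{a,r} \<in> E" using edge_E by blast
          obtain c where c: "c \<in> VC" "{a,r} = {r,c}" using ind_edge[OF eE _ rU(2)] by blast
          have "a = c" using c rU(2) by (auto simp: doubleton_eq_iff)
          then have "a \<in> VC" using c by simp
          moreover have "{r,a} \<in> E" using eE by (simp add: insert_commute)
          ultimately show "a \<in> Nst" unfolding Nst_def nbhd_star_def using rU(1) by blast
        qed
      qed
      have "card A \<le> card (Pow Nst)" using card_inj_on_le[OF inj img] finN by simp
      then show ?thesis using card_Pow[of Nst] finN by simp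
    qed
    have cB: "card B \<le> card VC ^ 2"
    proof -
      define wit where "wit w = (SOME p. fst p \<in> VC \<and> snd p \<in> VC \<and> {#{fst p,w},{w,snd p}#} \<subseteq># CC)" for w
      have witP: "fst (wit w) \<in> VC \<and> snd (wit w) \<in> VC \<and> {#{fst (wit w),w},{w,snd (wit w)}#} \<subseteq># CC"
        if "w \<in> B" for w
      proof -
        have "w \<notin> VC" "w \<in> mverts CC" using that unfolding B_def NR_def by auto
        then obtain a b where "a \<in> VC \<and> b \<in> VC \<and> {#{a,w},{w,b}#} \<subseteq># CC" using witness[OF I] by blast
        then have "\<exists>p. fst p \<in> VC \<and> snd p \<in> VC \<and> {#{fst p,w},{w,snd p}#} \<subseteq># CC" by (intro exI[of _ "(a,b)"]) simp
        from someI_ex[OF this] show ?thesis unfolding wit_def .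
      qed
      have inj: "inj_on wit B"
      proof (rule inj_onI)
        fix x y assume x: "x \<in> B" and y: "y \<in> B" and eq: "wit x = wit y"
        show "x = y"
        proof (rule ccontr)
          assume ne: "x \<noteq> y"
          have "x \<in> NR" "y \<in> NR" using x y unfolding B_def by auto
          then show False using nored[OF _ _ ne, of "fst (wit x)" "snd (wit x)"] witP[OF x] witP[OF y] eq
            by simp
        qed
      qed
      have img: "wit ` B \<subseteq> VC \<times> VC"
      proof
        fix p assume "p \<in> wit ` B"
        then obtain x where "x \<in> B" "p = wit x" by blast
        then show "p \<in> VC \<times> VC" using witP[of x] by (simp add: mem_Times_iff)
      qed
      have "card B \<le> card (VC \<times> VC)" using card_inj_on_le[OF inj img] finVC by simp
      then show ?thesis by (simp add: card_cartesian_product power2_eq_square)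
    qed
    have "card (mverts CC \<inter> U) \<le> card (A \<union> B)" using card_mono[OF finAB AB] .
    also have "\<dots> \<le> card A + card B" by (rule card_Un_le)
    finally have c1: "card (mverts CC \<inter> U) \<le> 2 ^ card Nst + card VC ^ 2" using cA cB by simp
    have c2: "card (mverts CC \<inter> U) \<le> card U" using card_mono[OF finU] by blast
    show ?thesis unfolding NumVer_def using c1 c2 unfolding Nst_def by simp
  qed
  show ?thesis
    apply (rule exI[of _ CC], rule exI[of _ Cs])
    apply (intro conjI)
    using sub cyc4 bound mcon vin evn vcs f0' sumeq by blast+
qed

end

theorem mainTheorem9:
  fixes V :: "'a set" and E :: "'a set set" and VC :: "'a set" and v_init :: 'a
    and Ehat :: "'a set multiset"
  assumes "simple_graph V E" and "graph_connected V E"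
    and "v_init \<in> V" and "vertex_cover V E VC" and "v_init \<in> VC"
    and "set_mset Ehat \<subseteq> E"
    and "mconnected Ehat" and "v_init \<in> mverts Ehat" and "all_even_deg Ehat"
    and "\<forall>e. count Ehat e \<le> 2"
  shows "\<exists>CC Cs. CC \<subseteq># Ehat \<and> (\<forall>C\<in>#Cs. is_cycle_in Ehat C) \<and>
     (\<forall>U\<in>EQ V E VC. card (mverts CC \<inter> U) \<le> NumVer E VC U) \<and>
     mconnected CC \<and> v_init \<in> mverts CC \<and> all_even_deg CC \<and>
     mverts CC \<inter> VC = mverts Ehat \<inter> VC \<and>
     size (filter_mset (\<lambda>C. cyc_len C \<noteq> 4) Cs) \<le> 2 * card VC ^ 2 \<and>
     (\<forall>C\<in>#Cs. cyc_len C \<noteq> 4 \<longrightarrow> simple_cycle C) \<and>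
     CC + sum_mset (image_mset cyc_edges Cs) = Ehat"
proof -
  interpret ctx V E VC v_init Ehat
    using assms by unfold_locales auto
  show ?thesis by (rule main_thm)
qed

end
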